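(* If $L \subseteq a^*$ is a unary language, then $\mathbb{OGI}^*(L) = 2\mathbb{OC}^*(L)$.
   Context: Outfix-guided insertion: $x \leftarrow y = \{ x_1 u z v x_2 \mid x = x_1 u v x_2,\ y = u z v,\ u \neq \varepsilon,\ v \neq \varepsilon \}$, extended to languages by union over all pairs. $\mathbb{OGI}^{(0)}(L) = L$, $\mathbb{OGI}^{(i+1)}(L) = \mathbb{OGI}^{(i)}(L) \leftarrow \mathbb{OGI}^{(i)}(L)$, $\mathbb{OGI}^*(L) = \bigcup_{i\ge 0}\mathbb{OGI}^{(i)}(L)$. The 2-overlap catenation of strings is $x \,\overline{\odot}^2\, y = \{ uvw \mid x = uv,\ y = vw,\ u,w \in \Sigma^*,\ |v| \geq 2 \}$, extended to languages by union over all pairs. $2\mathbb{OC}^{(0)}(L) = L$, $2\mathbb{OC}^{(i+1)}(L) = 2\mathbb{OC}^{(i)}(L) \,\overline{\odot}^2\, 2\mathbb{OC}^{(i)}(L)$, and $2\mathbb{OC}^*(L) = \bigcup_{i \geq 0} 2\mathbb{OC}^{(i)}(L)$. *)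

theory Defs
  imports Main
begin

definition ogi_str :: "'a list \<Rightarrow> 'a list \<Rightarrow> 'a list set" where
  "ogi_str x y = {x1 @ u @ z @ v @ x2 | x1 u z v x2.
      x = x1 @ u @ v @ x2 \<and> y = u @ z @ v \<and> u \<noteq> [] \<and> v \<noteq> []}"

definition ogi_lang :: "'a list set \<Rightarrow> 'a list set \<Rightarrow> 'a list set" where
  "ogi_lang A B = (\<Union>x\<in>A. \<Union>y\<in>B. ogi_str x y)"

fun OGI_iter :: "nat \<Rightarrow> 'a list set \<Rightarrow> 'a list set" where
  "OGI_iter 0 L = L"
| "OGI_iter (Suc i) L = ogi_lang (OGI_iter i L) (OGI_iter i L)"

definition OGI_star :: "'a list set \<Rightarrow> 'a list set" where
  "OGI_star L = (\<Union>i. OGI_iter i L)"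

definition oc2_str :: "'a list \<Rightarrow> 'a list \<Rightarrow> 'a list set" where
  "oc2_str x y = {u @ v @ w | u v w. x = u @ v \<and> y = v @ w \<and> length v \<ge> 2}"

definition oc2_lang :: "'a list set \<Rightarrow> 'a list set \<Rightarrow> 'a list set" where
  "oc2_lang A B = (\<Union>x\<in>A. \<Union>y\<in>B. oc2_str x y)"

fun OC2_iter :: "nat \<Rightarrow> 'a list set \<Rightarrow> 'a list set" where
  "OC2_iter 0 L = L"
| "OC2_iter (Suc i) L = oc2_lang (OC2_iter i L) (OC2_iter i L)"

definition OC2_star :: "'a list set \<Rightarrow> 'a list set" where
  "OC2_star L = (\<Union>i. OC2_iter i L)"

end

theory Submission
  imports Defs
begin

lemma lists_a_eq:
  assumes "xs \<in> lists {a}" "ys \<in> lists {a}" "length xs = length ys"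
  shows "xs = ys"
proof -
  have 1: "\<forall>z\<in>set xs. z = a" "\<forall>z\<in>set ys. z = a" using assms(1,2) by (simp_all add: in_lists_conv_set)
  have "replicate (length xs) a = xs" by (rule replicate_length_same) (use 1 in blast)
  moreover have "replicate (length ys) a = ys" by (rule replicate_length_same) (use 1 in blast)
  ultimately show ?thesis using assms(3) by metis
qed

lemma rep_lists: "replicate n a \<in> lists {a}"
  by (simp add: in_lists_conv_set)

lemma ogi_char:
  assumes x: "x \<in> lists {a}" and y: "y \<in> lists {a}"
  shows "ogi_str x y = {w. w \<in> lists {a} \<and> (\<exists>t. 2 \<le> t \<and> t \<le> length x \<and> t \<le> length y
            \<and> length w = length x + length y - t)}"
proof (intro set_eqI iffI)
  fix w assume "w \<in> ogi_str x y"
  then obtain x1 u z v x2 where w: "w = x1 @ u @ z @ v @ x2" and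
    h: "x = x1 @ u @ v @ x2" "y = u @ z @ v" "u \<noteq> []" "v \<noteq> []"
    unfolding ogi_str_def by blast
  have 1: "w \<in> lists {a}" using x y h w by auto
  have 2: "2 \<le> length u + length v" using h by (cases u; cases v; auto)
  have 3: "length u + length v \<le> length x" "length u + length v \<le> length y"
    "length w = length x + length y - (length u + length v)" using h w by simp_all
  show "w \<in> {w. w \<in> lists {a} \<and> (\<exists>t. 2 \<le> t \<and> t \<le> length x \<and> t \<le> length y
            \<and> length w = length x + length y - t)}"
    using 1 2 3 by blast
next
  fix w assume "w \<in> {w. w \<in> lists {a} \<and> (\<exists>t. 2 \<le> t \<and> t \<le> length x \<and> t \<le> length y
            \<and> length w = length x + length y - t)}"
  then obtain t where w: "w \<in> lists {a}" and t: "2 \<le> t" "t \<le> length x" "t \<le> length y"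
    "length w = length x + length y - t" by blast
  define u where "u = [a]"
  define v where "v = replicate (t - 1) a"
  define z where "z = replicate (length y - t) a"
  define x2 where "x2 = replicate (length x - t) a"
  have e1: "x = [] @ u @ v @ x2"
    by (rule lists_a_eq[OF x]) (use t in \<open>auto simp: u_def v_def x2_def rep_lists\<close>)
  have e2: "y = u @ z @ v"
    by (rule lists_a_eq[OF y]) (use t in \<open>auto simp: u_def v_def z_def rep_lists\<close>)
  have e3: "w = [] @ u @ z @ v @ x2"
    by (rule lists_a_eq[OF w]) (use t in \<open>auto simp: u_def v_def z_def x2_def rep_lists\<close>)
  have e4: "u \<noteq> []" "v \<noteq> []" using t by (auto simp: u_def v_def)
  show "w \<in> ogi_str x y" unfolding ogi_str_def mem_Collect_eq
    apply (rule exI[of _ "[]"], rule exI[of _ u], rule exI[of _ z], rule exI[of _ v], rule exI[of _ x2])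
    using e1 e2 e3 e4 by simp
qed

lemma oc2_char:
  assumes x: "x \<in> lists {a}" and y: "y \<in> lists {a}"
  shows "oc2_str x y = {w. w \<in> lists {a} \<and> (\<exists>t. 2 \<le> t \<and> t \<le> length x \<and> t \<le> length y
            \<and> length w = length x + length y - t)}"
proof (intro set_eqI iffI)
  fix w assume "w \<in> oc2_str x y"
  then obtain u v z where w: "w = u @ v @ z" and
    h: "x = u @ v" "y = v @ z" "2 \<le> length v"
    unfolding oc2_str_def by blast
  show "w \<in> {w. w \<in> lists {a} \<and> (\<exists>t. 2 \<le> t \<and> t \<le> length x \<and> t \<le> length y
            \<and> length w = length x + length y - t)}"
  proof -
    have 1: "w \<in> lists {a}" using x y h w by auto
    have 3: "length v \<le> length x" "length v \<le> length y"
      "length w = length x + length y - length v" using h w by simp_all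
    show ?thesis using 1 3 h(3) by blast
  qed
next
  fix w assume "w \<in> {w. w \<in> lists {a} \<and> (\<exists>t. 2 \<le> t \<and> t \<le> length x \<and> t \<le> length y
            \<and> length w = length x + length y - t)}"
  then obtain t where w: "w \<in> lists {a}" and t: "2 \<le> t" "t \<le> length x" "t \<le> length y"
    "length w = length x + length y - t" by blast
  define u where "u = replicate (length x - t) a"
  define v where "v = replicate t a"
  define z where "z = replicate (length y - t) a"
  have e1: "x = u @ v"
    by (rule lists_a_eq[OF x]) (use t in \<open>auto simp: u_def v_def rep_lists\<close>)
  have e2: "y = v @ z"
    by (rule lists_a_eq[OF y]) (use t in \<open>auto simp: z_def v_def rep_lists\<close>)
  have e3: "w = u @ v @ z"
    by (rule lists_a_eq[OF w]) (use t in \<open>auto simp: u_def v_def z_def rep_lists\<close>)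
  have e4: "2 \<le> length v" using t by (auto simp: v_def)
  show "w \<in> oc2_str x y" unfolding oc2_str_def mem_Collect_eq
    apply (rule exI[of _ u], rule exI[of _ v], rule exI[of _ z])
    using e1 e2 e3 e4 by simp
qed

lemma str_eq: "x \<in> lists {a} \<Longrightarrow> y \<in> lists {a} \<Longrightarrow> ogi_str x y = oc2_str x y"
  by (simp add: ogi_char oc2_char)

lemma str_sub: "x \<in> lists {a} \<Longrightarrow> y \<in> lists {a} \<Longrightarrow> oc2_str x y \<subseteq> lists {a}"
  by (auto simp: oc2_char)

lemma iter_eq:
  assumes "L \<subseteq> lists {a}"
  shows "OGI_iter i L = OC2_iter i L \<and> OC2_iter i L \<subseteq> lists {a}"
proof (induction i)
  case 0 then show ?case using assms by simp
next
  case (Suc i)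
  then have e: "OGI_iter i L = OC2_iter i L" and s: "OC2_iter i L \<subseteq> lists {a}" by auto
  have "ogi_lang (OC2_iter i L) (OC2_iter i L) = oc2_lang (OC2_iter i L) (OC2_iter i L)"
    unfolding ogi_lang_def oc2_lang_def proof (intro SUP_cong refl)
    fix x y assume "x \<in> OC2_iter i L" "y \<in> OC2_iter i L"
    then show "ogi_str x y = oc2_str x y" by (rule str_eq[OF subsetD[OF s] subsetD[OF s]])
  qed
  moreover have "oc2_lang (OC2_iter i L) (OC2_iter i L) \<subseteq> lists {a}"
    unfolding oc2_lang_def
  proof (intro UN_least)
    fix x y assume "x \<in> OC2_iter i L" "y \<in> OC2_iter i L"
    then show "oc2_str x y \<subseteq> lists {a}" by (rule str_sub[OF subsetD[OF s] subsetD[OF s]])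
  qed
  ultimately show ?case using e by simp
qed

theorem corollary4p9:
  fixes a :: 'a and L :: "'a list set"
  assumes "L \<subseteq> lists {a}"
  shows "OGI_star L = OC2_star L"
  unfolding OGI_star_def OC2_star_def using iter_eq[OF assms] by simp

end
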